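(* Let $k\in\mathbb{N}$ and let $F\colon S_{\ell_\infty^k}\to S_{\ell_1^k}$ be an injective continuous map which does not increase support size. Then there is a permutation $\pi$ of $\{1,\dots,k\}$ such that $F\circ P_\pi$ is support preserving. In particular, $F$ preserves support size, i.e. $|\mathrm{supp}(F(x))|=|\mathrm{supp}(x)|$ for all $x\in S_{\ell_\infty^k}$.
   Context: $S_{\ell_p^k}$ is the unit sphere of $(\mathbb{R}^k,\|\cdot\|_p)$. $\mathrm{supp}(x)=\{i:x_i\neq0\}$. $F$ does not increase support size if $|\mathrm{supp}(F(x))|\le|\mathrm{supp}(x)|$ for all $x$; $G$ is support preserving if $\mathrm{supp}(G(x))=\mathrm{supp}(x)$ for all $x$. $P_\pi(x_j)_{j=1}^k=(x_{\pi(j)})_{j=1}^k$. *)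

theory Defs
  imports "HOL-Analysis.Analysis"
begin

text \<open>Vectors in R^k are modelled as real^'n, with 'n a finite index type of size k.\<close>

definition linf_norm :: "real^'n \<Rightarrow> real" where
  "linf_norm x = (MAX i\<in>UNIV. \<bar>x $ i\<bar>)"

definition l1_norm :: "real^'n \<Rightarrow> real" where
  "l1_norm x = (\<Sum>i\<in>UNIV. \<bar>x $ i\<bar>)"

definition sphere_linf :: "(real^'n) set" where
  "sphere_linf = {x. linf_norm x = 1}"

definition sphere_l1 :: "(real^'n) set" where
  "sphere_l1 = {x. l1_norm x = 1}"

definition supp :: "real^'n \<Rightarrow> 'n set" where
  "supp x = {i. x $ i \<noteq> 0}"

definition perm_coords :: "('n \<Rightarrow> 'n) \<Rightarrow> real^'n \<Rightarrow> real^'n" where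
  "perm_coords \<pi> x = (\<chi> j. x $ \<pi> j)"

end

theory Submission
  imports Defs "HOL-Homology.Invariance_of_Domain"
begin

definition sgnv :: "real^'n \<Rightarrow> real^'n" where "sgnv x = (\<chi> i. sgn (x$i))"
definition svecs :: "(real^'n) set" where "svecs = {s. \<forall>i. s$i \<in> {-1,0,1}}"
definition piece :: "real^'n \<Rightarrow> (real^'n) set" where
  "piece s = {x. l1_norm x = 1 \<and> sgnv x = s}"
definition affp :: "real^'n \<Rightarrow> (real^'n) set" where
  "affp s = {x. (\<forall>i. s$i = 0 \<longrightarrow> x$i = 0) \<and> s \<bullet> x = 1}"
definition openp :: "real^'n \<Rightarrow> (real^'n) set" where
  "openp s = {x. \<forall>i. s$i \<noteq> 0 \<longrightarrow> 0 < s$i * x$i}"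
definition kset :: "real^'n \<Rightarrow> (real^'n) set" where
  "kset s = {x. l1_norm x = 1 \<and> (\<forall>i. 0 \<le> s$i * x$i \<and> (s$i = 0 \<longrightarrow> x$i = 0))}"
definition center :: "real^'n \<Rightarrow> real^'n" where
  "center s = s /\<^sub>R real (card (supp s))"

lemma supp_sgnv[simp]: "supp (sgnv x) = supp x"
  by (auto simp: supp_def sgnv_def sgn_if)

lemma sgnv_svecs: "sgnv x \<in> svecs"
  by (auto simp: svecs_def sgnv_def sgn_if)

lemma finite_svecs: "finite (svecs :: (real^'n) set)"
proof -
  have "(svecs::(real^'n) set) \<subseteq> (\<lambda>f. \<chi> i. f i) ` (UNIV \<rightarrow>\<^sub>E ({-1,0,1}::real set))"
  proof
    fix s :: "real^'n" assume "s \<in> svecs"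
    then have "(\<lambda>i. s$i) \<in> UNIV \<rightarrow>\<^sub>E {-1,0,1}" by (auto simp: svecs_def)
    then show "s \<in> (\<lambda>f. \<chi> i. f i) ` (UNIV \<rightarrow>\<^sub>E ({-1,0,1}::real set))"
      by (intro image_eqI[of _ _ "\<lambda>i. s$i"]) auto
  qed
  moreover have "finite ((\<lambda>f. \<chi> i. f i) ` (UNIV \<rightarrow>\<^sub>E ({-1,0,1}::real set)) :: (real^'n) set)"
    by (intro finite_imageI finite_PiE) auto
  ultimately show ?thesis by (rule finite_subset)
qed

lemma continuous_l1: "continuous_on S (l1_norm :: real^'n \<Rightarrow> real)"
  unfolding l1_norm_def[abs_def] by (intro continuous_intros)

lemma closed_sphere_l1: "closed (sphere_l1 :: (real^'n) set)"
proof -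
  have "closed {x::real^'n. l1_norm x \<in> {1}}"
    using closed_Collect_eq[of "l1_norm::real^'n\<Rightarrow>real" "\<lambda>_. 1"] continuous_l1 by auto
  then show ?thesis by (simp add: sphere_l1_def)
qed

lemma norm_le_l1: "norm x \<le> l1_norm (x::real^'n)"
  by (simp add: l1_norm_def norm_le_l1_cart)

lemma bounded_sphere_l1: "bounded (sphere_l1 :: (real^'n) set)"
  unfolding bounded_iff sphere_l1_def by (rule exI[of _ 1]) (metis mem_Collect_eq norm_le_l1)

lemma l1_zero_supp: "l1_norm x = 1 \<Longrightarrow> supp (x::real^'n) \<noteq> {}"
proof
  assume "l1_norm x = 1" "supp x = {}"
  then have "\<forall>i. x$i = 0" by (auto simp: supp_def)
  with \<open>l1_norm x = 1\<close> show False by (simp add: l1_norm_def)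
qed

lemma card_supp_pos: "l1_norm x = 1 \<Longrightarrow> card (supp (x::real^'n)) > 0"
  using l1_zero_supp by (simp add: card_gt_0_iff)

lemma abs_eq_sgn_mult: "\<bar>x::real\<bar> = sgn x * x"
  by (simp add: sgn_if)

lemma piece_eq: assumes "s \<in> svecs" shows "piece s = affp s \<inter> openp s"
proof (rule Set.set_eqI, rule iffI)
  fix x assume x: "x \<in> piece s"
  then have s: "\<And>i. s$i = sgn (x$i)" by (auto simp: piece_def sgnv_def)
  have "s \<bullet> x = l1_norm x"
    by (simp add: inner_vec_def l1_norm_def s abs_eq_sgn_mult)
  with x s show "x \<in> affp s \<inter> openp s"
    by (auto simp: piece_def affp_def openp_def sgn_if)
next
  fix x assume x: "x \<in> affp s \<inter> openp s"
  have s: "s$i = sgn (x$i)" for i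
  proof -
    have "s$i \<in> {-1,0,1}" using assms by (auto simp: svecs_def)
    moreover have "s$i = 0 \<Longrightarrow> x$i = 0" "s$i \<noteq> 0 \<Longrightarrow> 0 < s$i * x$i"
      using x by (auto simp: affp_def openp_def)
    ultimately show ?thesis by (auto simp: sgn_if)
  qed
  have "s \<bullet> x = l1_norm x"
    by (simp add: inner_vec_def l1_norm_def s abs_eq_sgn_mult)
  with x s show "x \<in> piece s"
    by (auto simp: piece_def affp_def sgnv_def vec_eq_iff)
qed


lemma affp_split: fixes s :: "real^'n" shows "affp s = {x. \<forall>i. i \<notin> supp s \<longrightarrow> x$i = 0} \<inter> {x. s \<bullet> x = 1}"
  by (auto simp: affp_def supp_def)

lemma subspace_substd: "subspace {x::real^'n. \<forall>i. i \<notin> d \<longrightarrow> x$i = 0}"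
  by (auto simp: subspace_def)

lemma affine_affp: fixes s :: "real^'n" shows "affine (affp s)"
  unfolding affp_split
  by (intro affine_Int subspace_imp_affine subspace_substd affine_hyperplane)

lemma l1_norm_scaleR: "l1_norm (c *\<^sub>R (x::real^'n)) = \<bar>c\<bar> * l1_norm x"
  by (simp add: l1_norm_def abs_mult sum_distrib_left)

lemma center_piece: fixes s :: "real^'n" assumes "s \<in> svecs" "supp s \<noteq> {}" shows "center s \<in> piece s"
proof -
  let ?c = "real (card (supp s))"
  have c: "?c > 0" using assms(2) by (simp add: card_gt_0_iff)
  have abs: "\<bar>s$i\<bar> = (if i \<in> supp s then 1 else 0)" for i
  proof -
    have "s$i \<in> {-1,0,1}" using assms(1) by (auto simp: svecs_def)
    then show ?thesis by (auto simp: supp_def)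
  qed
  have "l1_norm (center s) = (\<Sum>i\<in>UNIV. \<bar>s$i\<bar>) / ?c"
    using c by (simp add: l1_norm_scaleR center_def) (simp add: l1_norm_def divide_inverse mult.commute)
  also have "(\<Sum>i\<in>UNIV. \<bar>s$i\<bar>) = ?c"
    by (simp add: abs sum.If_cases supp_def)
  finally have "l1_norm (center s) = 1" using c assms(2) by simp
  moreover have "sgnv (center s) = s"
  proof -
    have "sgn (inverse ?c * s$i) = s$i" for i
    proof -
      have "s$i \<in> {-1,0,1}" using assms(1) by (auto simp: svecs_def)
      then show ?thesis using c by (auto simp: sgn_mult)
    qed
    then show ?thesis by (simp add: sgnv_def center_def vec_eq_iff)
  qed
  ultimately show ?thesis by (simp add: piece_def)
qed

lemma aff_dim_affp: fixes s :: "real^'n" assumes "s \<in> svecs" "supp s \<noteq> {}"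
  shows "aff_dim (affp s) = int (card (supp s)) - 1"
proof -
  let ?V = "{x::real^'n. \<forall>i. i \<notin> supp s \<longrightarrow> x$i = 0}"
  have "dim ?V = card (supp s)"
    using dim_substandard_cart[where 'a=real, of "supp s"] dim_vec_eq[of ?V] by simp
  then have "aff_dim ?V = int (card (supp s))"
    using aff_dim_subspace[OF subspace_substd[of "supp s"]] by simp
  moreover have "?V \<inter> {v. s \<bullet> v = 1} \<noteq> {}"
    using center_piece[OF assms] piece_eq[OF assms(1)] affp_split by blast
  moreover have "\<not> ?V \<subseteq> {v. s \<bullet> v = 1}"
  proof -
    have "(0::real^'n) \<in> ?V" "(0::real^'n) \<notin> {v. s \<bullet> v = 1}" by auto
    then show ?thesis by blast
  qed
  ultimately show ?thesis
    by (simp add: affp_split aff_dim_affine_Int_hyperplane subspace_imp_affine[OF subspace_substd])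
qed

lemma open_openp: fixes s :: "real^'n" shows "open (openp s)"
proof -
  have "openp s = (\<Inter>i\<in>supp s. {x. 0 < s$i * x$i})"
    by (auto simp: openp_def supp_def)
  moreover have "open {x::real^'n. 0 < s$i * x$i}" for i
    by (rule open_Collect_less) (intro continuous_intros)+
  ultimately show ?thesis by (auto intro!: open_INT)
qed

lemma convex_openp: fixes s :: "real^'n" shows "convex (openp s)"
  unfolding convex_def openp_def
proof (clarify)
  fix x y :: "real^'n" and u v :: real and i
  assume x: "\<forall>i. s $ i \<noteq> 0 \<longrightarrow> 0 < s $ i * x $ i" and y: "\<forall>i. s $ i \<noteq> 0 \<longrightarrow> 0 < s $ i * y $ i"
    and uv: "0 \<le> u" "0 \<le> v" "u + v = 1" and si: "s $ i \<noteq> 0"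
  have a: "0 < s$i * x$i" "0 < s$i * y$i" using x y si by auto
  have "s $ i * (u *\<^sub>R x + v *\<^sub>R y) $ i = u * (s$i * x$i) + v * (s$i * y$i)"
    by (simp add: algebra_simps)
  also have "\<dots> > 0"
  proof (cases "u = 0")
    case True then show ?thesis using uv a by simp
  next
    case False then have "u > 0" using uv by simp
    then show ?thesis using uv a by (simp add: add_pos_nonneg)
  qed
  finally show "0 < s $ i * (u *\<^sub>R x + v *\<^sub>R y) $ i" .
qed

lemma connected_piece: fixes s :: "real^'n" assumes "s \<in> svecs" shows "connected (piece s)"
  by (simp add: piece_eq[OF assms] convex_connected convex_Int affine_imp_convex affine_affp convex_openp)

lemma openin_piece: fixes s :: "real^'n" assumes "s \<in> svecs" shows "openin (top_of_set (affp s)) (piece s)"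
  by (simp add: piece_eq[OF assms] openin_open_Int open_openp Int_commute)


lemma kset_abs: fixes s :: "real^'n" assumes "s \<in> svecs" "x \<in> kset s"
  shows "s$i * x$i = \<bar>x$i\<bar>"
proof -
  have "s$i \<in> {-1,0,1}" using assms(1) by (auto simp: svecs_def)
  moreover have "0 \<le> s$i * x$i" "s$i = 0 \<longrightarrow> x$i = 0" using assms(2) by (auto simp: kset_def)
  ultimately show ?thesis by auto
qed

lemma kset_inner: fixes s :: "real^'n" assumes "s \<in> svecs" "x \<in> kset s"
  shows "s \<bullet> x = 1"
proof -
  have "s \<bullet> x = l1_norm x" by (simp add: inner_vec_def l1_norm_def kset_abs[OF assms])
  then show ?thesis using assms(2) by (simp add: kset_def)
qed

lemma piece_sub_kset: fixes s :: "real^'n" assumes "s \<in> svecs" shows "piece s \<subseteq> kset s"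
proof
  fix x assume "x \<in> piece s"
  then have "l1_norm x = 1" "s = sgnv x" by (auto simp: piece_def)
  then show "x \<in> kset s" by (auto simp: kset_def sgnv_def sgn_if)
qed

lemma kset_sphere: "kset s \<subseteq> sphere_l1"
  by (auto simp: kset_def sphere_l1_def)

lemma kset_supp: fixes s :: "real^'n" shows "x \<in> kset s \<Longrightarrow> supp x \<subseteq> supp s"
  by (auto simp: kset_def supp_def)

lemma kset_piece: fixes s :: "real^'n" assumes "s \<in> svecs" "x \<in> kset s" "supp x = supp s"
  shows "x \<in> piece s"
proof -
  have "sgn (x$i) = s$i" for i
  proof -
    have "s$i \<in> {-1,0,1}" using assms(1) by (auto simp: svecs_def)
    moreover have "0 \<le> s$i * x$i" "s$i = 0 \<longrightarrow> x$i = 0" using assms(2) by (auto simp: kset_def)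
    moreover have "x$i = 0 \<longleftrightarrow> s$i = 0" using assms(3) by (auto simp: supp_def set_eq_iff)
    ultimately show ?thesis by (auto simp: sgn_if)
  qed
  then show ?thesis using assms(2) by (auto simp: piece_def kset_def sgnv_def vec_eq_iff)
qed

lemma closed_kset: fixes s :: "real^'n" shows "closed (kset s)"
proof -
  have "kset s = sphere_l1 \<inter> (\<Inter>i. {x. 0 \<le> s$i * x$i}) \<inter> (\<Inter>i\<in>{i. s$i = 0}. {x. x$i = 0})"
    by (auto simp: kset_def sphere_l1_def)
  moreover have "closed {x::real^'n. 0 \<le> s$i * x$i}" for i
    by (rule closed_Collect_le) (intro continuous_intros)+
  moreover have "closed {x::real^'n. x$i = 0}" for i
    by (rule closed_Collect_eq) (intro continuous_intros)+
  ultimately show ?thesis using closed_sphere_l1 by (auto intro!: closed_Int closed_INT)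
qed

lemma compact_kset: fixes s :: "real^'n" shows "compact (kset s)"
  unfolding compact_eq_bounded_closed
  by (intro conjI closed_kset bounded_subset[OF bounded_sphere_l1 kset_sphere])

lemma seg_piece: fixes s :: "real^'n" assumes "s \<in> svecs" "x \<in> kset s" "c \<in> piece s" "0 < d" "d \<le> 1"
  shows "(1 - d) *\<^sub>R x + d *\<^sub>R c \<in> piece s"
proof -
  have ca: "c \<in> affp s" "c \<in> openp s" using assms(3) piece_eq[OF assms(1)] by auto
  have "s \<bullet> ((1 - d) *\<^sub>R x + d *\<^sub>R c) = (1 - d) * (s \<bullet> x) + d * (s \<bullet> c)"
    by (simp add: inner_add_right)
  also have "\<dots> = 1" using kset_inner[OF assms(1,2)] ca(1) by (simp add: affp_def)
  finally have 1: "s \<bullet> ((1 - d) *\<^sub>R x + d *\<^sub>R c) = 1" .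
  have 2: "0 < s$i * ((1 - d) *\<^sub>R x + d *\<^sub>R c)$i" if "s$i \<noteq> 0" for i
  proof -
    have "0 \<le> s$i * x$i" using assms(2) by (simp add: kset_def)
    moreover have "0 < s$i * c$i" using ca(2) that by (simp add: openp_def)
    ultimately have "0 < (1 - d) * (s$i * x$i) + d * (s$i * c$i)"
      using assms(4,5) by (simp add: add_nonneg_pos)
    then show ?thesis by (simp add: algebra_simps)
  qed
  have 3: "((1 - d) *\<^sub>R x + d *\<^sub>R c)$i = 0" if "s$i = 0" for i
    using that assms(2) ca(1) by (simp add: kset_def affp_def)
  show ?thesis using 1 2 3 by (simp add: piece_eq[OF assms(1)] affp_def openp_def)
qed

lemma kset_closure: fixes s :: "real^'n" assumes "s \<in> svecs" "supp s \<noteq> {}"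
  shows "kset s \<subseteq> closure (piece s)"
proof
  fix x assume x: "x \<in> kset s"
  define c where "c = center s"
  have c: "c \<in> piece s" using center_piece[OF assms] by (simp add: c_def)
  define y where "y n = (1 - inverse (real (Suc n))) *\<^sub>R x + inverse (real (Suc n)) *\<^sub>R c" for n
  have "y n \<in> piece s" for n
    unfolding y_def by (rule seg_piece[OF assms(1) x c]) (auto simp: field_simps)
  moreover have "y \<longlonglongrightarrow> (1 - 0) *\<^sub>R x + 0 *\<^sub>R c"
    unfolding y_def by (intro tendsto_intros LIMSEQ_inverse_real_of_nat)
  ultimately show "x \<in> closure (piece s)"
    unfolding closure_sequential by auto
qed


definition lev :: "nat \<Rightarrow> (real^'n) set" where
  "lev m = {y \<in> sphere_l1. card (supp y) \<le> m}"

lemma piece_sphere: "piece s \<subseteq> sphere_l1"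
  by (auto simp: piece_def sphere_l1_def)

lemma piece_supp: "x \<in> piece s \<Longrightarrow> supp x = supp s"
  by (auto simp: piece_def)

lemma openp_card_piece: fixes t :: "real^'n"
  assumes t: "t \<in> svecs" and y: "y \<in> sphere_l1" "y \<in> openp t" "card (supp y) \<le> card (supp t)"
  shows "y \<in> piece t"
proof -
  have sub: "supp t \<subseteq> supp y"
    using y(2) by (auto simp: openp_def supp_def)
  then have eq: "supp y = supp t" using card_seteq[OF finite sub y(3)] by simp
  have "sgn (y$i) = t$i" for i
  proof -
    have "t$i \<in> {-1,0,1}" using t by (auto simp: svecs_def)
    moreover have "t$i \<noteq> 0 \<Longrightarrow> 0 < t$i * y$i" using y(2) by (simp add: openp_def)
    moreover have "t$i = 0 \<Longrightarrow> y$i = 0" using eq by (auto simp: supp_def set_eq_iff)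
    ultimately show ?thesis by (auto simp: sgn_if)
  qed
  then show ?thesis using y(1) by (auto simp: piece_def sphere_l1_def sgnv_def vec_eq_iff)
qed

lemma axis_sphere: "e \<in> {-1,1} \<Longrightarrow> axis i (e::real) \<in> (sphere_l1::(real^'n) set)"
proof -
  assume e: "e \<in> {-1,1}"
  have "(\<Sum>j\<in>UNIV. \<bar>axis i e $ j\<bar>) = (\<Sum>j\<in>UNIV. if j = i then \<bar>e\<bar> else 0)"
    by (rule sum.cong) (auto simp: axis_def)
  then show ?thesis using e by (auto simp: sphere_l1_def l1_norm_def)
qed

lemma supp_axis: "e \<noteq> 0 \<Longrightarrow> supp (axis i (e::real) :: real^'n) = {i}"
  by (auto simp: supp_def axis_def)

lemma kset_single: fixes t y :: "real^'n"
  assumes t: "t \<in> svecs" and y: "y \<in> kset t" and sp: "supp y = {c}"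
  shows "y = axis c (t$c)"
proof -
  have z: "y$j = 0" if "j \<noteq> c" for j using sp that by (auto simp: supp_def)
  have "(\<Sum>j\<in>UNIV. \<bar>y$j\<bar>) = (\<Sum>j\<in>UNIV. if j = c then \<bar>y$c\<bar> else 0)"
    by (rule sum.cong) (auto simp: z)
  then have a: "\<bar>y$c\<bar> = 1" using y by (simp add: kset_def l1_norm_def)
  have "t$c * y$c = \<bar>y$c\<bar>" by (rule kset_abs[OF t y])
  moreover have "t$c \<in> {-1,0,1}" using t by (auto simp: svecs_def)
  ultimately have "y$c = t$c" using a by auto
  then show ?thesis using z by (auto simp: axis_def vec_eq_iff)
qed

locale gmap =
  fixes G :: "real^'n \<Rightarrow> real^'n"
  assumes Gmaps: "G ` sphere_l1 \<subseteq> sphere_l1"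
    and Ginj: "inj_on G sphere_l1"
    and Gcont: "continuous_on sphere_l1 G"
    and Gni: "\<forall>x\<in>sphere_l1. card (supp (G x)) \<le> card (supp x)"
begin

definition H :: "nat \<Rightarrow> bool" where "H m \<longleftrightarrow> lev m \<subseteq> G ` lev m"

lemma level:
  assumes "H m" "x \<in> sphere_l1" "card (supp x) = Suc m"
  shows "card (supp (G x)) = Suc m"
proof (rule ccontr)
  assume ne: "card (supp (G x)) \<noteq> Suc m"
  have "card (supp (G x)) \<le> Suc m" using Gni assms by auto
  with ne have "G x \<in> lev m" using Gmaps assms(2) by (auto simp: lev_def)
  then obtain x' where x': "x' \<in> lev m" "G x = G x'" using assms(1) by (auto simp: H_def)
  then have "x = x'" using Ginj assms(2) by (auto simp: lev_def inj_on_def)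
  with x' assms(3) show False by (simp add: lev_def)
qed

lemma KS:
  assumes Hm: "H m" and s: "s \<in> svecs" and cs: "card (supp s) = Suc m"
  shows "\<exists>t\<in>svecs. card (supp t) = Suc m \<and> G ` piece s = piece t"
proof -
  have sne: "supp s \<noteq> {}" using cs by auto
  define x0 where "x0 = center s"
  have x0: "x0 \<in> piece s" using center_piece[OF s sne] by (simp add: x0_def)
  define t where "t = sgnv (G x0)"
  have t: "t \<in> svecs" by (simp add: t_def sgnv_svecs)
  have lvl: "card (supp (G x)) = Suc m" if "x \<in> piece s" for x
    using level[OF Hm subsetD[OF piece_sphere that]] piece_supp[OF that] cs by simp
  have ct: "card (supp t) = Suc m" using lvl[OF x0] by (simp add: t_def)
  have Gsph: "G x \<in> sphere_l1" if "x \<in> piece s" for x using subsetD[OF piece_sphere that] Gmaps by blast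
  let ?A = "G ` piece s"
  have conA: "connected ?A"
    by (rule connected_continuous_image[OF continuous_on_subset[OF Gcont piece_sphere] connected_piece[OF s]])
  define O2 where "O2 = (\<Union>i\<in>{i. t$i \<noteq> 0}. {y::real^'n. t$i * y$i < 0}) \<union> (\<Union>i\<in>{i. t$i = 0}. {y. y$i \<noteq> 0})"
  have oO2: "open O2"
  proof -
    have "open {y::real^'n. t$i * y$i < 0}" for i
      by (rule open_Collect_less) (intro continuous_intros)+
    moreover have "open {y::real^'n. y$i \<noteq> 0}" for i
    proof -
      have "{y::real^'n. y$i \<noteq> 0} = {y. y$i < 0} \<union> {y. 0 < y$i}" by auto
      moreover have "open {y::real^'n. y$i < 0}" "open {y::real^'n. 0 < y$i}"
        by (rule open_Collect_less; intro continuous_intros)+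
      ultimately show ?thesis by auto
    qed
    ultimately show ?thesis unfolding O2_def by (intro open_Un open_UN) auto
  qed
  have sub1: "y \<in> piece t" if "y \<in> ?A" "y \<in> openp t" for y
    using that openp_card_piece[OF t] Gsph lvl ct by auto
  have disj: "openp t \<inter> O2 \<inter> ?A = {}"
  proof (rule ccontr)
    assume "openp t \<inter> O2 \<inter> ?A \<noteq> {}"
    then obtain y where y: "y \<in> openp t" "y \<in> O2" "y \<in> ?A" by blast
    then have "y \<in> piece t" using sub1 by auto
    then have "sgnv y = t" by (simp add: piece_def)
    with y(2) show False
      by (auto simp: O2_def sgnv_def sgn_if mult_less_0_iff split: if_splits)
  qed
  have cover: "?A \<subseteq> openp t \<union> O2"
  proof
    fix y assume yA: "y \<in> ?A"
    show "y \<in> openp t \<union> O2"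
    proof (cases "y \<in> openp t")
      case False
      then obtain i where i: "t$i \<noteq> 0" "\<not> 0 < t$i * y$i" by (auto simp: openp_def)
      show ?thesis
      proof (cases "y$i = 0")
        case False
        then have "t$i * y$i < 0" using i(2) by (simp add: not_less_iff_gr_or_eq i(1))
        then show ?thesis using i(1) by (auto simp: O2_def)
      next
        case True
        have cy: "card (supp y) = card (supp t)" using yA lvl ct by auto
        have "\<not> supp y \<subseteq> supp t"
        proof
          assume "supp y \<subseteq> supp t"
          then have "supp y = supp t" using card_seteq[OF finite, of "supp y" "supp t"] cy by simp
          then show False using True i(1) by (auto simp: supp_def set_eq_iff)
        qed
        then show ?thesis by (auto simp: O2_def supp_def)
      qed
    qed simp
  qed
  have "G x0 \<in> openp t"
    by (auto simp: openp_def t_def sgnv_def sgn_if)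
  then have "openp t \<inter> ?A \<noteq> {}" using x0 by blast
  then have "O2 \<inter> ?A = {}"
    using connectedD[OF conA open_openp oO2 _ cover] disj by (auto simp: Int_ac)
  then have Asub: "?A \<subseteq> piece t" using cover sub1 by blast
  have ope: "openin (top_of_set (piece t)) ?A"
  proof -
    have tne: "supp t \<noteq> {}" using ct by auto
    have "openin (top_of_set (affp t)) ?A"
    proof (rule invariance_of_domain_affine_sets[OF openin_piece[OF s] affine_affp affine_affp])
      show "aff_dim (affp t) \<le> aff_dim (affp s)"
        using aff_dim_affp[OF s sne] aff_dim_affp[OF t tne] cs ct by simp
      show "continuous_on (piece s) G" by (rule continuous_on_subset[OF Gcont piece_sphere])
      show "?A \<subseteq> affp t" using Asub piece_eq[OF t] by blast
      show "inj_on G (piece s)" by (rule inj_on_subset[OF Ginj piece_sphere])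
    qed
    then show ?thesis
      by (rule openin_subset_trans[OF _ Asub]) (simp add: piece_eq[OF t])
  qed
  have clo: "closedin (top_of_set (piece t)) ?A"
  proof -
    have eq: "?A = piece t \<inter> G ` kset s"
    proof
      show "?A \<subseteq> piece t \<inter> G ` kset s" using Asub piece_sub_kset[OF s] by blast
      show "piece t \<inter> G ` kset s \<subseteq> ?A"
      proof
        fix y assume y: "y \<in> piece t \<inter> G ` kset s"
        then obtain x where x: "x \<in> kset s" "y = G x" by blast
        show "y \<in> ?A"
        proof (cases "supp x = supp s")
          case True
          then show ?thesis using kset_piece[OF s x(1)] x(2) by blast
        next
          case False
          then have "supp x \<subset> supp s" using kset_supp[OF x(1)] by blast
          then have "card (supp x) < card (supp s)" by (simp add: psubset_card_mono)
          moreover have "card (supp (G x)) \<le> card (supp x)" using Gni subsetD[OF kset_sphere x(1)] by simp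
          moreover have "supp (G x) = supp t" using piece_supp[of "G x" t] y x(2) by simp
          ultimately have False using cs ct by simp
          then show ?thesis ..
        qed
      qed
    qed
    have "compact (G ` kset s)"
      by (rule compact_continuous_image[OF continuous_on_subset[OF Gcont kset_sphere] compact_kset])
    then have "closed (G ` kset s)" by (rule compact_imp_closed)
    then show ?thesis unfolding eq by (rule closedin_closed_Int)
  qed
  have "?A = {} \<or> ?A = piece t"
    using connected_piece[OF t] ope clo unfolding connected_clopen by blast
  then have "?A = piece t" using x0 by blast
  then show ?thesis using t ct by blast
qed

lemma H0: "H 0"
  using l1_zero_supp by (auto simp: H_def lev_def sphere_l1_def)

lemma Hstep: assumes Hm: "H m" shows "H (Suc m)"
proof -
  define I where "I = {s \<in> (svecs::(real^'n) set). card (supp s) = Suc m}"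
  have fI: "finite I" unfolding I_def by (rule finite_subset[OF _ finite_svecs]) auto
  define phi where "phi s = sgnv (G (center s))" for s :: "real^'n"
  have php: "G ` piece s = piece (phi s) \<and> phi s \<in> I" if "s \<in> I" for s
  proof -
    have s: "s \<in> svecs" "card (supp s) = Suc m" using that by (auto simp: I_def)
    then have sne: "supp s \<noteq> {}" by auto
    obtain t where t: "t \<in> svecs" "card (supp t) = Suc m" "G ` piece s = piece t"
      using KS[OF Hm s] by blast
    have "G (center s) \<in> piece t" using t(3) center_piece[OF s(1) sne] by blast
    then have "phi s = t" by (simp add: phi_def piece_def)
    then show ?thesis using t by (simp add: I_def)
  qed
  have inj: "inj_on phi I"
  proof (rule inj_onI)
    fix s s' assume ss: "s \<in> I" "s' \<in> I" "phi s = phi s'"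
    have sv: "s \<in> svecs" "supp s \<noteq> {}" using ss(1) by (auto simp: I_def)
    have c: "center s \<in> piece s" using center_piece[OF sv] .
    then have "G (center s) \<in> G ` piece s'" using php[OF ss(1)] php[OF ss(2)] ss(3) by auto
    then obtain y where y: "y \<in> piece s'" "G (center s) = G y" by blast
    have "center s = y"
      using inj_onD[OF Ginj y(2) subsetD[OF piece_sphere c] subsetD[OF piece_sphere y(1)]] .
    then show "s = s'" using c y(1) by (simp add: piece_def)
  qed
  have surj: "phi ` I = I"
    by (rule endo_inj_surj[OF fI _ inj]) (use php in blast)
  show ?thesis unfolding H_def
  proof
    fix y :: "real^'n" assume y: "y \<in> lev (Suc m)"
    show "y \<in> G ` lev (Suc m)"
    proof (cases "card (supp y) \<le> m")
      case True
      then have "y \<in> G ` lev m" using Hm y by (auto simp: H_def lev_def)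
      moreover have "lev m \<subseteq> lev (Suc m)" by (auto simp: lev_def)
      ultimately show ?thesis by blast
    next
      case False
      then have cy: "card (supp y) = Suc m" using y by (simp add: lev_def)
      have "sgnv y \<in> I" using cy by (simp add: I_def sgnv_svecs)
      then obtain s where s: "s \<in> I" "sgnv y = phi s" using surj by force
      have "y \<in> piece (sgnv y)" using y by (simp add: piece_def lev_def sphere_l1_def)
      then have "y \<in> G ` piece s" using php[OF s(1)] s(2) by simp
      moreover have "piece s \<subseteq> lev (Suc m)"
        using s(1) piece_supp by (auto simp: I_def lev_def piece_def sphere_l1_def)
      ultimately show ?thesis by blast
    qed
  qed
qed

lemma Hall: "H m"
  by (induction m) (auto intro: H0 Hstep)

lemma PL: assumes s: "s \<in> svecs" "supp s \<noteq> {}"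
  shows "\<exists>t\<in>svecs. card (supp t) = card (supp s) \<and> G ` piece s = piece t"
proof -
  obtain m where m: "card (supp s) = Suc m"
    using s(2) by (metis card_0_eq finite not0_implies_Suc)
  show ?thesis using KS[OF Hall s(1) m] m by simp
qed

definition cc :: "'n \<Rightarrow> real \<Rightarrow> 'n" where "cc i e = the_elem (supp (G (axis i e)))"

lemma cc_supp: assumes "e \<in> {-1,1}" shows "supp (G (axis i e)) = {cc i e}"
proof -
  have "axis i e \<in> sphere_l1" using assms by (rule axis_sphere)
  moreover have "card (supp (axis i e)) = Suc 0" using assms supp_axis[of e i] by auto
  ultimately have "card (supp (G (axis i e))) = 1" using level[OF Hall] by simp
  then obtain j where "supp (G (axis i e)) = {j}" by (rule card_1_singletonE)
  then show ?thesis by (simp add: cc_def)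
qed

lemma SL: assumes x: "x \<in> sphere_l1"
  shows "supp (G x) = (\<lambda>i. cc i (sgn (x$i))) ` supp x \<and> inj_on (\<lambda>i. cc i (sgn (x$i))) (supp x)"
proof -
  define s where "s = sgnv x"
  have s: "s \<in> svecs" by (simp add: s_def sgnv_svecs)
  have sx: "supp s = supp x" by (simp add: s_def)
  have sne: "supp s \<noteq> {}" using x l1_zero_supp by (simp add: sx sphere_l1_def)
  have xp: "x \<in> piece s" using x by (simp add: piece_def s_def sphere_l1_def)
  obtain t where t: "t \<in> svecs" "card (supp t) = card (supp s)" "G ` piece s = piece t"
    using PL[OF s sne] by blast
  have "G x \<in> piece t" using t(3) xp by blast
  then have sGx: "supp (G x) = supp t" by (rule piece_supp)
  let ?f = "\<lambda>i. cc i (sgn (x$i))"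
  have clsub: "closure (piece s) \<subseteq> sphere_l1"
    by (rule closure_minimal[OF piece_sphere closed_sphere_l1])
  have "G ` piece s \<subseteq> kset t" using t(3) piece_sub_kset[OF t(1)] by simp
  then have Gcl: "G ` closure (piece s) \<subseteq> kset t"
    by (rule image_closure_subset[OF continuous_on_subset[OF Gcont clsub] closed_kset])
  have Gv: "G (axis i (sgn (x$i))) = axis (?f i) (t $ ?f i) \<and> ?f i \<in> supp t" if i: "i \<in> supp x" for i
  proof -
    let ?e = "sgn (x$i)"
    have e: "?e \<in> {-1,1}" using i by (auto simp: supp_def sgn_if)
    have "axis i ?e \<in> kset s"
    proof -
      have "0 \<le> s$j * axis i ?e $ j \<and> (s$j = 0 \<longrightarrow> axis i ?e $ j = 0)" for j
        using i by (cases "j = i") (auto simp: axis_def s_def sgnv_def supp_def sgn_if)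
      then show ?thesis using axis_sphere[OF e, of i] by (simp add: kset_def sphere_l1_def)
    qed
    then have "axis i ?e \<in> closure (piece s)" by (rule subsetD[OF kset_closure[OF s sne]])
    then have k: "G (axis i ?e) \<in> kset t" using Gcl by blast
    have sp: "supp (G (axis i ?e)) = {?f i}" using cc_supp[OF e] .
    then have "?f i \<in> supp t" using kset_supp[OF k] by blast
    then show ?thesis using kset_single[OF t(1) k sp] by simp
  qed
  have inj: "inj_on ?f (supp x)"
  proof (rule inj_onI)
    fix i j assume ij: "i \<in> supp x" "j \<in> supp x" "?f i = ?f j"
    have eqG: "G (axis i (sgn (x$i))) = G (axis j (sgn (x$j)))" using Gv[OF ij(1)] Gv[OF ij(2)] ij(3) by simp
    have m: "axis i (sgn (x$i)) \<in> sphere_l1" "axis j (sgn (x$j)) \<in> sphere_l1"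
      using ij(1,2) axis_sphere by (auto simp: supp_def sgn_if)
    have "axis i (sgn (x$i)) = axis j (sgn (x$j))" by (rule inj_onD[OF Ginj eqG m])
    then show "i = j" using ij(1) by (auto simp: axis_eq_axis supp_def sgn_if split: if_splits)
  qed
  have sub: "?f ` supp x \<subseteq> supp t"
  proof (rule image_subsetI)
    fix i assume "i \<in> supp x" then show "?f i \<in> supp t" using Gv[of i] by simp
  qed
  have ce: "card (?f ` supp x) = card (supp t)" using card_image[OF inj] t(2) sx by simp
  have "?f ` supp x = supp t" by (rule card_seteq[OF finite sub]) (simp add: ce)
  then show ?thesis using inj sGx by simp
qed

lemma full: assumes s: "s \<in> svecs" "supp s = UNIV"
  shows "inj (\<lambda>j. cc j (s$j))"
proof -
  have sne: "supp s \<noteq> {}" using s(2) by simp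
  have c: "center s \<in> piece s" using center_piece[OF s(1) sne] .
  then have "center s \<in> sphere_l1" using piece_sphere by blast
  have "supp (center s) = UNIV" using piece_supp[OF c] s(2) by simp
  with SL[OF \<open>center s \<in> sphere_l1\<close>] have "inj_on (\<lambda>i. cc i (sgn (center s $ i))) UNIV"
    by simp
  moreover have "sgn (center s $ i) = s $ i" for i
    using c by (auto simp: piece_def sgnv_def vec_eq_iff)
  ultimately show ?thesis by simp
qed

lemma flip: "cc i (-1) = cc i 1"
proof -
  define s1 :: "real^'n" where "s1 = (\<chi> j. (1::real))"
  define s2 :: "real^'n" where "s2 = (\<chi> j. if j = i then -1 else (1::real))"
  have a: "s1 \<in> svecs" "supp s1 = UNIV" "s2 \<in> svecs" "supp s2 = UNIV"
    by (auto simp: s1_def s2_def svecs_def supp_def)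
  have i1: "inj (\<lambda>j. cc j 1)" using full[OF a(1,2)] by (simp add: s1_def)
  have i2: "inj (\<lambda>j. cc j (if j = i then -1 else 1))" using full[OF a(3,4)] by (simp add: s2_def)
  have "surj (\<lambda>j. cc j (if j = i then -1 else 1))" using finite_UNIV_inj_surj[OF finite_class.finite_UNIV i2] .
  then obtain k where k: "cc i 1 = cc k (if k = i then -1 else 1)" by (metis (no_types, lifting) surjD)
  show ?thesis
  proof (cases "k = i")
    case True then show ?thesis using k by simp
  next
    case False
    then have "cc i 1 = cc k 1" using k by simp
    then have "i = k" using i1 by (auto dest: injD)
    then show ?thesis using False by simp
  qed
qed

theorem core: "\<exists>\<sigma>. \<sigma> permutes (UNIV::'n set) \<and> (\<forall>x\<in>sphere_l1. supp (G x) = \<sigma> ` supp x)"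
proof -
  define \<sigma> where "\<sigma> = (\<lambda>i. cc i 1)"
  have a: "(\<chi> j. (1::real)) \<in> svecs" "supp (\<chi> j. (1::real)) = (UNIV::'n set)"
    by (auto simp: svecs_def supp_def)
  have "inj (\<lambda>j. cc j ((\<chi> j. (1::real)) $ j))" by (rule full[OF a])
  then have inj: "inj \<sigma>" by (simp add: \<sigma>_def)
  then have "bij \<sigma>" using finite_UNIV_inj_surj[OF finite_class.finite_UNIV inj] by (simp add: bij_def)
  then have perm: "\<sigma> permutes UNIV" by (intro bij_imp_permutes) auto
  have "supp (G x) = \<sigma> ` supp x" if x: "x \<in> sphere_l1" for x
  proof -
    have eq: "cc i (sgn (x$i)) = \<sigma> i" if "i \<in> supp x" for i
    proof (cases "x$i > 0")
      case True then show ?thesis by (simp add: \<sigma>_def)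
    next
      case False
      then have "x$i < 0" using that by (simp add: supp_def)
      then show ?thesis using flip by (simp add: \<sigma>_def)
    qed
    have "supp (G x) = (\<lambda>i. cc i (sgn (x$i))) ` supp x" using SL[OF x] by blast
    also have "\<dots> = \<sigma> ` supp x" by (rule image_cong[OF refl eq])
    finally show ?thesis .
  qed
  then show ?thesis using perm by blast
qed

end


lemma linf_ge: "\<bar>x$i\<bar> \<le> linf_norm (x::real^'n)"
  unfolding linf_norm_def by (rule Max_ge) auto

lemma linf_le: "(\<And>i. \<bar>x$i\<bar> \<le> c) \<Longrightarrow> linf_norm (x::real^'n) \<le> c"
  unfolding linf_norm_def by (rule Max.boundedI) auto

lemma linf_lip: "linf_norm (x::real^'n) \<le> linf_norm y + norm (x - y)"
proof (rule linf_le)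
  fix i
  have "\<bar>x$i\<bar> \<le> \<bar>y$i\<bar> + \<bar>(x - y)$i\<bar>" by simp
  also have "\<dots> \<le> linf_norm y + norm (x - y)"
    by (intro add_mono linf_ge component_le_norm_cart)
  finally show "\<bar>x$i\<bar> \<le> linf_norm y + norm (x - y)" .
qed

lemma continuous_linf: "continuous_on S (linf_norm :: real^'n \<Rightarrow> real)"
proof -
  have "1-lipschitz_on S (linf_norm :: real^'n \<Rightarrow> real)"
  proof (rule lipschitz_onI)
    fix x y :: "real^'n"
    have "linf_norm x \<le> linf_norm y + norm (x - y)" "linf_norm y \<le> linf_norm x + norm (y - x)"
      by (rule linf_lip)+
    then show "dist (linf_norm x) (linf_norm y) \<le> 1 * dist x y"
      by (simp add: dist_norm dist_real_def norm_minus_commute abs_le_iff)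
  qed simp
  then show ?thesis by (rule lipschitz_on_continuous_on)
qed

lemma linf_scaleR: "linf_norm (c *\<^sub>R (x::real^'n)) = \<bar>c\<bar> * linf_norm x"
proof -
  have "linf_norm (c *\<^sub>R x) = Max ((*) \<bar>c\<bar> ` ((\<lambda>i. \<bar>x$i\<bar>) ` UNIV))"
    by (simp add: linf_norm_def image_image abs_mult)
  also have "\<dots> = \<bar>c\<bar> * linf_norm x"
    unfolding linf_norm_def
    by (rule mono_Max_commute[symmetric]) (auto simp: mono_def mult_left_mono)
  finally show ?thesis .
qed

lemma supp_scaleR: "c \<noteq> 0 \<Longrightarrow> supp (c *\<^sub>R (x::real^'n)) = supp x"
  by (auto simp: supp_def)

lemma linf_pos: "x \<noteq> 0 \<Longrightarrow> 0 < linf_norm (x::real^'n)"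
proof -
  assume "x \<noteq> 0"
  then obtain i where "x$i \<noteq> 0" by (auto simp: vec_eq_iff)
  then have "0 < \<bar>x$i\<bar>" by simp
  also have "\<dots> \<le> linf_norm x" by (rule linf_ge)
  finally show ?thesis .
qed

lemma l1_pos: "x \<noteq> 0 \<Longrightarrow> 0 < l1_norm (x::real^'n)"
proof -
  assume "x \<noteq> 0"
  then obtain i where "x$i \<noteq> 0" by (auto simp: vec_eq_iff)
  then have "0 < \<bar>x$i\<bar>" by simp
  also have "\<dots> \<le> l1_norm x" unfolding l1_norm_def
    by (rule member_le_sum) auto
  finally show ?thesis .
qed

lemma linf_zero: "linf_norm (0::real^'n) = 0"
  by (simp add: linf_norm_def)

theorem lemma4p6:
  fixes F :: "real^'n \<Rightarrow> real^'n"
  assumes maps: "F ` sphere_linf \<subseteq> sphere_l1"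
    and inj: "inj_on F sphere_linf"
    and cont: "continuous_on sphere_linf F"
    and nonincr: "\<forall>x\<in>sphere_linf. card (supp (F x)) \<le> card (supp x)"
  shows "\<exists>\<pi>. \<pi> permutes (UNIV :: 'n set) \<and>
           (\<forall>x\<in>sphere_linf. supp (F (perm_coords \<pi> x)) = supp x)
         \<and> (\<forall>x\<in>sphere_linf. card (supp (F x)) = card (supp x))"
proof -
  define R :: "real^'n \<Rightarrow> real^'n" where "R y = inverse (linf_norm y) *\<^sub>R y" for y
  define Q :: "real^'n \<Rightarrow> real^'n" where "Q x = inverse (l1_norm x) *\<^sub>R x" for x
  have nz1: "y \<noteq> 0" if "y \<in> sphere_l1" for y :: "real^'n"
    using that by (auto simp: sphere_l1_def l1_norm_def)
  have nz2: "x \<noteq> 0" if "x \<in> sphere_linf" for x :: "real^'n"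
    using that by (auto simp: sphere_linf_def linf_norm_def)
  have R1: "R y \<in> sphere_linf" "Q (R y) = y" "supp (R y) = supp y" if y: "y \<in> sphere_l1" for y
  proof -
    have p: "0 < linf_norm y" using linf_pos[OF nz1[OF y]] .
    show "R y \<in> sphere_linf" using p by (simp add: R_def sphere_linf_def linf_scaleR)
    have "l1_norm (R y) = inverse (linf_norm y)" using p y by (simp add: R_def l1_norm_scaleR sphere_l1_def)
    then show "Q (R y) = y" using p by (simp add: Q_def R_def)
    show "supp (R y) = supp y" using p by (simp add: R_def supp_scaleR)
  qed
  have Q1: "Q x \<in> sphere_l1" "R (Q x) = x" "supp (Q x) = supp x" if x: "x \<in> sphere_linf" for x
  proof -
    have p: "0 < l1_norm x" using l1_pos[OF nz2[OF x]] .
    show "Q x \<in> sphere_l1" using p by (simp add: Q_def sphere_l1_def l1_norm_scaleR)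
    have "linf_norm (Q x) = inverse (l1_norm x)" using p x by (simp add: Q_def linf_scaleR sphere_linf_def)
    then show "R (Q x) = x" using p by (simp add: Q_def R_def)
    show "supp (Q x) = supp x" using p by (simp add: Q_def supp_scaleR)
  qed
  define G where "G y = F (R y)" for y
  have "gmap G"
  proof
    show "G ` sphere_l1 \<subseteq> sphere_l1" using maps R1(1) by (auto simp: G_def)
    show "inj_on G sphere_l1"
    proof (rule inj_onI)
      fix y y' assume yy: "y \<in> sphere_l1" "y' \<in> sphere_l1" "G y = G y'"
      then have "R y = R y'" using inj_onD[OF inj _ R1(1) R1(1)] by (simp add: G_def)
      then show "y = y'" using R1(2)[OF yy(1)] R1(2)[OF yy(2)] by metis
    qed
    have "continuous_on sphere_l1 R"
      unfolding R_def[abs_def]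
      by (intro continuous_intros continuous_linf) (metis less_irrefl linf_pos nz1)
    then show "continuous_on sphere_l1 G"
      unfolding G_def[abs_def] by (rule continuous_on_compose2[OF cont]) (use R1(1) in blast)
    show "\<forall>x\<in>sphere_l1. card (supp (G x)) \<le> card (supp x)"
      using nonincr R1(1,3) unfolding G_def by metis
  qed
  then obtain \<sigma> where \<sigma>: "\<sigma> permutes (UNIV::'n set)" "\<forall>y\<in>sphere_l1. supp (G y) = \<sigma> ` supp y"
    using gmap.core by blast
  have Fs: "supp (F x) = \<sigma> ` supp x" if x: "x \<in> sphere_linf" for x :: "real^'n"
  proof -
    have "F x = G (Q x)" using Q1(2)[OF x] by (simp add: G_def)
    then show ?thesis using \<sigma>(2) Q1(1,3)[OF x] by simp
  qed
  have surj: "surj \<sigma>" by (rule permutes_surj[OF \<sigma>(1)])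
  have injs: "inj \<sigma>" by (rule permutes_inj[OF \<sigma>(1)])
  have pc: "perm_coords \<sigma> x \<in> sphere_linf" if x: "x \<in> sphere_linf" for x :: "real^'n"
  proof -
    have "(\<lambda>j. \<bar>x $ \<sigma> j\<bar>) ` UNIV = (\<lambda>i. \<bar>x$i\<bar>) ` (\<sigma> ` UNIV)" by (simp add: image_image)
    then have "linf_norm (perm_coords \<sigma> x) = linf_norm x"
      using surj by (simp add: linf_norm_def perm_coords_def)
    then show ?thesis using x by (simp add: sphere_linf_def)
  qed
  have ps: "supp (perm_coords \<sigma> x) = \<sigma> -` supp x" for x :: "real^'n"
    by (auto simp: supp_def perm_coords_def)
  show ?thesis
  proof (intro exI[of _ \<sigma>] conjI ballI)
    show "\<sigma> permutes UNIV" by (rule \<sigma>(1))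
  next
    fix x :: "real^'n" assume x: "x \<in> sphere_linf"
    show "supp (F (perm_coords \<sigma> x)) = supp x"
      using Fs[OF pc[OF x]] ps surj_image_vimage_eq[OF surj] by simp
  next
    fix x :: "real^'n" assume x: "x \<in> sphere_linf"
    show "card (supp (F x)) = card (supp x)"
      using Fs[OF x] card_image[OF inj_on_subset[OF injs subset_UNIV]] by simp
  qed
qed

end
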